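(* Consider progressive filtering with an ensemble of $M$ selection strategies $s_1,\dots,s_M$, $J$ batches per strategy per round, sampling ratio $\alpha\in(0,1)$ and batch size $b$. Let $r\ge 1$ be a round, let $\mathbf{x}\in\mathcal{C}_{r-1}$, and for each $m\in\{1,\dots,M\}$ let $p_{m,r}(\mathbf{x})$ be the probability that strategy $s_m$ includes $\mathbf{x}$ in a selected batch during round $r$, given that $\mathbf{x}$ is present in the random subsample. Then the probability that $\mathbf{x}$ survives round $r$, $P_r(\mathbf{x})=\Pr(\mathbf{x}\in\mathcal{C}_r\mid \mathbf{x}\in\mathcal{C}_{r-1})$, satisfies $$P_r(\mathbf{x})\ \ge\ 1-\Big(1-\alpha\cdot\max_{m\in\{1,\dots,M\}} p_{m,r}(\mathbf{x})\Big)^J.$$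
   Context: Setting (pool-based batch active learning). $\mathcal{U}_t$ is a finite unlabeled pool. A selection strategy $s$ is a (possibly randomized) map taking a finite set $\mathcal{P}$ of instances and a batch size $b$ to a subset $s(\mathcal{P},b)\subseteq\mathcal{P}$ of size $b$. Progressive filtering with strategies $s_1,\dots,s_M$, number of rounds $R$, number of batches per strategy $J$, and sampling ratio $\alpha\in(0,1)$ produces pools $\mathcal{C}_0=\mathcal{U}_t\supseteq \mathcal{C}_1\supseteq\dots\supseteq\mathcal{C}_R$ by $$\mathcal{C}_r=\bigcup_{m=1}^M\bigcup_{j=1}^J s_m\big(\mathrm{SubSample}(\mathcal{C}_{r-1},\alpha|\mathcal{C}_{r-1}|),\,b\big),$$ where each $\mathrm{SubSample}(\mathcal{C},n)$ draws $n$ instances of $\mathcal{C}$ uniformly at random without replacement, a fresh independent subsample being drawn for each of the $M\cdot J$ pairs $(m,j)$ in each round, so that each fixed instance of $\mathcal{C}_{r-1}$ lies in a given subsample with probability $\alpha$, and the $M\cdot J$ draws of a round are independent. *)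

theory Defs
  imports "HOL-Probability.Probability"
begin

text \<open>A selection strategy of the ensemble: strategy index m, pool P, batch size b,
  returns a (possibly randomized) batch, i.e. a distribution over subsets of P.\<close>
type_synonym 'a strategies = "nat \<Rightarrow> 'a set \<Rightarrow> nat \<Rightarrow> 'a set pmf"

definition subsamples :: "'a set \<Rightarrow> nat \<Rightarrow> 'a set set" where
  "subsamples C n = {S. S \<subseteq> C \<and> card S = n}"

definition SubSample :: "'a set \<Rightarrow> nat \<Rightarrow> 'a set pmf" where
  "SubSample C n = pmf_of_set (subsamples C n)"

definition batch_exp :: "'a strategies \<Rightarrow> nat \<Rightarrow> 'a set \<Rightarrow> nat \<Rightarrow> nat \<Rightarrow> ('a set \<times> 'a set) pmf" where
  "batch_exp s m C n b = SubSample C n \<bind> (\<lambda>S. map_pmf (\<lambda>T. (S, T)) (s m S b))"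

definition pairs :: "nat \<Rightarrow> nat \<Rightarrow> (nat \<times> nat) set" where
  "pairs M J = {1..M} \<times> {1..J}"

definition next_pool :: "'a strategies \<Rightarrow> nat \<Rightarrow> nat \<Rightarrow> 'a set \<Rightarrow> nat \<Rightarrow> nat \<Rightarrow> 'a set pmf" where
  "next_pool s M J C n b =
     map_pmf (\<lambda>\<omega>. \<Union>i\<in>pairs M J. \<omega> i)
       (Pi_pmf (pairs M J) {} (\<lambda>(m,j). map_pmf snd (batch_exp s m C n b)))"

definition incl_prob :: "'a strategies \<Rightarrow> nat \<Rightarrow> 'a set \<Rightarrow> nat \<Rightarrow> nat \<Rightarrow> 'a \<Rightarrow> real" where
  "incl_prob s m C n b x =
     measure_pmf.prob (batch_exp s m C n b) {(S,T). x \<in> S \<and> x \<in> T}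
     / measure_pmf.prob (batch_exp s m C n b) {(S,T). x \<in> S}"

end

theory Submission
  imports Defs
begin

lemma subsample_prob:
  assumes "finite C" "x \<in> C" "0 < n" "n \<le> card C"
  shows "measure_pmf.prob (SubSample C n) {S. x \<in> S} = real n / real (card C)"
proof -
  have fin: "finite (subsamples C n)" using assms(1) unfolding subsamples_def by simp
  have cardS: "card (subsamples C n) = card C choose n"
    using n_subsets[OF assms(1)] unfolding subsamples_def by simp
  have ne: "subsamples C n \<noteq> {}" using cardS assms(4) by (metis card.empty zero_less_binomial_iff less_irrefl)
  have eq: "subsamples C n \<inter> {S. x \<in> S} = insert x ` subsamples (C - {x}) (n - 1)"
  proof (intro equalityI subsetI)
    fix S assume S: "S \<in> subsamples C n \<inter> {S. x \<in> S}"
    hence "S - {x} \<in> subsamples (C - {x}) (n - 1)" using assms(1)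
      by (auto simp: subsamples_def intro: finite_subset)
    moreover have "S = insert x (S - {x})" using S by auto
    ultimately show "S \<in> insert x ` subsamples (C - {x}) (n - 1)" by blast
  next
    fix S assume "S \<in> insert x ` subsamples (C - {x}) (n - 1)"
    then obtain S' where S': "S' \<subseteq> C - {x}" "card S' = n - 1" "S = insert x S'"
      unfolding subsamples_def by auto
    have "finite S'" using S' assms(1) by (meson finite_Diff finite_subset)
    moreover have "x \<notin> S'" using S' by auto
    ultimately show "S \<in> subsamples C n \<inter> {S. x \<in> S}" using S' assms
      by (auto simp: subsamples_def)
  qed
  have inj: "inj_on (insert x) (subsamples (C - {x}) (n - 1))"
    unfolding subsamples_def inj_on_def by auto
  have c2: "card (subsamples C n \<inter> {S. x \<in> S}) = (card C - 1) choose (n - 1)"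
    unfolding eq card_image[OF inj] using n_subsets[of "C - {x}" "n - 1"] assms(1,2)
    unfolding subsamples_def by simp
  obtain N where N: "card C = Suc N" using assms by (metis card_0_eq empty_iff not0_implies_Suc)
  obtain k where k: "n = Suc k" using assms(3) by (metis gr0_implies_Suc)
  have "n * (card C choose n) = card C * ((card C - 1) choose (n - 1))"
    by (rule times_binomial_minus1_eq[OF assms(3)])
  hence key: "real n * real (card C choose n) = real (card C) * real ((card C - 1) choose (n - 1))"
    by (metis of_nat_mult)
  have pos: "real (card C choose n) > 0" using assms(4) by simp
  have "measure_pmf.prob (SubSample C n) {S. x \<in> S}
      = real (card (subsamples C n \<inter> {S. x \<in> S})) / real (card (subsamples C n))"
    unfolding SubSample_def by (rule measure_pmf_of_set[OF ne fin])
  also have "\<dots> = real n / real (card C)"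
    unfolding c2 cardS using key pos N by (simp add: field_simps)
  finally show ?thesis .
qed

theorem theorem1:
  fixes s :: "'a strategies" and M J b n :: nat and \<alpha> :: real
    and C :: "'a set" and x :: 'a
  assumes "M \<ge> 1"
    and "0 < \<alpha>" and "\<alpha> < 1"
    and "finite C" and "x \<in> C"
    and "real n = \<alpha> * real (card C)"
    and "\<And>m P. m \<in> {1..M} \<Longrightarrow> P \<subseteq> C \<Longrightarrow> card P = n \<Longrightarrow>
           set_pmf (s m P b) \<subseteq> {T. T \<subseteq> P \<and> card T = b}"
  shows "measure_pmf.prob (next_pool s M J C n b) {C'. x \<in> C'}
           \<ge> 1 - (1 - \<alpha> * Max ((\<lambda>m. incl_prob s m C n b x) ` {1..M})) ^ J"
proof -
  have cpos: "card C > 0" using assms(4,5) card_gt_0_iff by blast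
  have npos: "n > 0"
  proof -
    have "real n > 0" using assms(2,6) cpos by simp
    thus ?thesis by simp
  qed
  have nle: "n \<le> card C"
  proof -
    have "real n \<le> real (card C)" using assms(3,6) cpos by simp
    thus ?thesis by simp
  qed
  have pA: "measure_pmf.prob (SubSample C n) {S. x \<in> S} = \<alpha>"
    using subsample_prob[OF assms(4,5) npos nle] assms(6) cpos by simp
  have fin: "finite (subsamples C n)" using assms(4) unfolding subsamples_def by simp
  have ne: "subsamples C n \<noteq> {}"
    using n_subsets[OF assms(4), of n] nle unfolding subsamples_def
    by (metis card.empty zero_less_binomial_iff less_irrefl)
  have setS: "set_pmf (SubSample C n) = subsamples C n"
    unfolding SubSample_def using fin ne by simp
  define B where "B m = batch_exp s m C n b" for m
  define q where "q m = measure_pmf.prob (map_pmf snd (B m)) {T. x \<in> T}" for m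
  have supp: "set_pmf (B m) \<subseteq> {(S,T). T \<subseteq> S}" if "m \<in> {1..M}" for m
  proof
    fix z assume "z \<in> set_pmf (B m)"
    then obtain S T where "S \<in> subsamples C n" "T \<in> set_pmf (s m S b)" "z = (S,T)"
      unfolding B_def batch_exp_def using setS by auto
    thus "z \<in> {(S,T). T \<subseteq> S}" using assms(7)[OF that, of S] unfolding subsamples_def by auto
  qed
  have fstB: "map_pmf fst (B m) = SubSample C n" for m
    unfolding B_def batch_exp_def by (simp add: map_bind_pmf pmf.map_comp o_def map_pmf_const bind_return_pmf')
  have incl: "incl_prob s m C n b x = q m / \<alpha>" if "m \<in> {1..M}" for m
  proof -
    have "{(S,T). x \<in> S \<and> x \<in> T} \<inter> set_pmf (B m) = snd -` {T. x \<in> T} \<inter> set_pmf (B m)"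
    proof (intro equalityI subsetI)
      fix z assume z: "z \<in> {(S,T). x \<in> S \<and> x \<in> T} \<inter> set_pmf (B m)"
      thus "z \<in> snd -` {T. x \<in> T} \<inter> set_pmf (B m)" by auto
    next
      fix z assume z: "z \<in> snd -` {T. x \<in> T} \<inter> set_pmf (B m)"
      hence "z \<in> {(S,T). T \<subseteq> S}" using supp[OF that] by blast
      hence "snd z \<subseteq> fst z" by (simp add: case_prod_beta)
      thus "z \<in> {(S,T). x \<in> S \<and> x \<in> T} \<inter> set_pmf (B m)" using z by (cases z) auto
    qed
    hence num: "measure_pmf.prob (B m) {(S,T). x \<in> S \<and> x \<in> T} = q m"
      unfolding q_def measure_map_pmf by (metis measure_Int_set_pmf)
    have "measure_pmf.prob (B m) {(S,T). x \<in> S} = measure_pmf.prob (map_pmf fst (B m)) {S. x \<in> S}"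
    proof -
      have "{(S,T). x \<in> S} = fst -` {S. x \<in> S}" by auto
      thus ?thesis unfolding measure_map_pmf by metis
    qed
    hence den: "measure_pmf.prob (B m) {(S,T). x \<in> S} = \<alpha>" using fstB pA by simp
    show ?thesis unfolding incl_prob_def B_def[symmetric] num den ..
  qed
  have imgeq: "(\<lambda>m. incl_prob s m C n b x) ` {1..M} = (\<lambda>m. q m / \<alpha>) ` {1..M}"
    using incl by auto
  have Mne: "{1..M} \<noteq> {}" using assms(1) by auto
  obtain m0 where m0: "m0 \<in> {1..M}" "Max ((\<lambda>m. q m / \<alpha>) ` {1..M}) = q m0 / \<alpha>"
  proof -
    have "Max ((\<lambda>m. q m / \<alpha>) ` {1..M}) \<in> (\<lambda>m. q m / \<alpha>) ` {1..M}"
      by (rule Max_in) (use Mne in auto)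
    thus ?thesis using that by blast
  qed
  have qle: "q m \<le> q m0" if "m \<in> {1..M}" for m
  proof -
    have "q m / \<alpha> \<le> Max ((\<lambda>m. q m / \<alpha>) ` {1..M})"
      by (rule Max_ge) (use that in auto)
    hence "q m / \<alpha> \<le> q m0 / \<alpha>" using m0(2) by simp
    thus ?thesis using assms(2) by (simp add: divide_right_mono_neg field_simps)
  qed
  have amax: "\<alpha> * Max ((\<lambda>m. incl_prob s m C n b x) ` {1..M}) = q m0"
    unfolding imgeq m0(2) using assms(2) by simp
  define A where "A = pairs M J"
  have finA: "finite A" unfolding A_def pairs_def by simp
  define P where "P = Pi_pmf A {} (\<lambda>(m,j). map_pmf snd (B m))"
  have np: "next_pool s M J C n b = map_pmf (\<lambda>\<omega>. \<Union>i\<in>A. \<omega> i) P"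
    unfolding next_pool_def P_def A_def B_def by simp
  have "measure_pmf.prob P {\<omega>. x \<notin> (\<Union>i\<in>A. \<omega> i)}
      = measure_pmf.prob P (PiE_dflt A {} (\<lambda>i. {T. x \<notin> T}))"
  proof -
    have "{\<omega>. x \<notin> (\<Union>i\<in>A. \<omega> i)} \<inter> set_pmf P = PiE_dflt A {} (\<lambda>i. {T. x \<notin> T}) \<inter> set_pmf P"
      using set_Pi_pmf_subset[OF finA, of "{}" "\<lambda>(m,j). map_pmf snd (B m)"]
      unfolding P_def PiE_dflt_def by auto
    thus ?thesis by (metis measure_Int_set_pmf)
  qed
  also have "\<dots> = (\<Prod>i\<in>A. measure_pmf.prob ((\<lambda>(m,j). map_pmf snd (B m)) i) {T. x \<notin> T})"
    unfolding P_def by (rule measure_Pi_pmf_PiE_dflt[OF finA])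
  also have "\<dots> = (\<Prod>(m,j)\<in>{1..M}\<times>{1..J}. 1 - q m)"
  proof (rule prod.cong)
    show "A = {1..M}\<times>{1..J}" unfolding A_def pairs_def ..
  next
    fix i assume "i \<in> {1..M}\<times>{1..J}"
    obtain m j where i: "i = (m,j)" by fastforce
    have "measure_pmf.prob (map_pmf snd (B m)) {T. x \<notin> T} = 1 - q m"
      unfolding q_def using measure_pmf.prob_compl[of "{T. x \<in> T}" "map_pmf snd (B m)"]
      by (simp add: Compl_eq_Diff_UNIV[symmetric] Collect_neg_eq)
    thus "measure_pmf.prob ((\<lambda>(m,j). map_pmf snd (B m)) i) {T. x \<notin> T} = (case i of (m,j) \<Rightarrow> 1 - q m)"
      using i by simp
  qed
  also have "\<dots> = (\<Prod>m\<in>{1..M}. (1 - q m) ^ J)"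
    by (simp add: prod.cartesian_product[symmetric])
  also have "\<dots> \<le> (1 - q m0) ^ J"
  proof -
    have q01: "0 \<le> 1 - q m \<and> 1 - q m \<le> 1" for m
      unfolding q_def by simp
    have "(\<Prod>m\<in>{1..M}. (1 - q m) ^ J) = (1 - q m0) ^ J * (\<Prod>m\<in>{1..M} - {m0}. (1 - q m) ^ J)"
      using m0(1) by (simp add: prod.remove)
    also have "\<dots> \<le> (1 - q m0) ^ J * 1"
      apply (rule mult_left_mono)
      apply (rule prod_le_1)
      using q01 by (auto intro: power_le_one)
    finally show ?thesis by simp
  qed
  finally have bnd: "measure_pmf.prob P {\<omega>. x \<notin> (\<Union>i\<in>A. \<omega> i)} \<le> (1 - q m0) ^ J" .
  have "measure_pmf.prob (next_pool s M J C n b) {C'. x \<in> C'}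
      = 1 - measure_pmf.prob P {\<omega>. x \<notin> (\<Union>i\<in>A. \<omega> i)}"
  proof -
    have c: "{\<omega>. x \<notin> (\<Union>i\<in>A. \<omega> i)} = UNIV - {\<omega>. x \<in> (\<Union>i\<in>A. \<omega> i)}" by auto
    have v: "(\<lambda>\<omega>. \<Union>i\<in>A. \<omega> i) -` {C'. x \<in> C'} = {\<omega>. x \<in> (\<Union>i\<in>A. \<omega> i)}" by auto
    show ?thesis unfolding np measure_map_pmf v c
      using measure_pmf.prob_compl[of "{\<omega>. x \<in> (\<Union>i\<in>A. \<omega> i)}" P] by simp
  qed
  thus ?thesis using bnd amax by simp
qed

end
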